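(* For each event $k$, let $\mathcal{P}^{\Theta}_k\subseteq\mathcal{P}$ be a set of accumulators (a "bounding box") containing $\operatorname{round}(W(\mathbf{x}_k,t_k;\boldsymbol{\theta}))$ for every $\boldsymbol{\theta}\in\Theta$. Assume the nesting property: for all $\boldsymbol{\theta}\in\Theta$ and all $1\le i<j$, if $\operatorname{round}(W(\mathbf{x}_i,t_i;\boldsymbol{\theta}))=\operatorname{round}(W(\mathbf{x}_j,t_j;\boldsymbol{\theta}))$ then $\mathcal{P}^{\Theta}_i\subseteq\mathcal{P}^{\Theta}_j$. Define recursively the upper-bound IWE $\overline{I}^n:\mathcal{P}\to\mathbb{Z}_{\ge0}$ and numbers $Q^{n}$, $\overline{L_n}$ by $\overline{I}^0\equiv 0$, $\overline{L_0}=0$, and for $n\ge 0$: $$Q^{n}=\max_{\mathbf{p}\in\mathcal{P}^{\Theta}_{n+1}}\overline{I}^{n}(\mathbf{p}),\qquad \overline{L_{n+1}}=\overline{L_n}+1+2Q^{n},$$ and $\overline{I}^{n+1}$ is obtained from $\overline{I}^{n}$ by adding $1$ at one accumulator $\boldsymbol{\nu}_{n+1}\in\mathcal{P}^{\Theta}_{n+1}$ attaining the maximum $Q^{n}$. Then for every $N\ge 0$ and every $\boldsymbol{\theta}\in\Theta$ one has $Q^{N}\ge I^{N}\big(\operatorname{round}(W(\mathbf{x}_{N+1},t_{N+1};\boldsymbol{\theta}));\boldsymbol{\theta}\big)$ (when event $N+1$ exists) and $$L^{\mathrm{SoS}}_{N}(\boldsymbol{\theta})\le\overline{L_N};\quad\text{in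 particular}\quad \max_{\boldsymbol{\theta}\in\Theta}L^{\mathrm{SoS}}_N(\boldsymbol{\theta})\le\overline{L_N}.$$
   Context: Events: a finite sequence $e_k=(\mathbf{x}_k,t_k)$, $k=1,2,\dots$, with $\mathbf{x}_k\in\mathbb{R}^2$ and timestamps $t_1\le t_2\le\cdots$. A warping function $W(\mathbf{x},t;\boldsymbol{\theta})\in\mathbb{R}^2$ depends on a parameter $\boldsymbol{\theta}$ ranging over a set $\Theta$ (the search space). The accumulators form a finite set $\mathcal{P}\subset\mathbb{Z}^2$ of lattice points; it is assumed that for every event $k$ and every $\boldsymbol\theta\in\Theta$, no coordinate of $W(\mathbf{x}_k,t_k;\boldsymbol{\theta})$ has fractional part exactly $1/2$ and the nearest lattice point $\operatorname{round}(W(\mathbf{x}_k,t_k;\boldsymbol{\theta}))$ lies in $\mathcal{P}$. The indicator $\mathbf{1}(\mathbf{p}-\mathbf{x}')$ equals $1$ if both coordinates of $\mathbf{p}-\mathbf{x}'$ have absolute value $<1/2$ and $0$ otherwise. The image of warped events (IWE) built from the first $N$ events is $I^N(\mathbf{p};\boldsymbol{\theta})=\sum_{k=1}^N\mathbf{1}(\mathbf{p}-W(\mathbf{x}_k,t_k;\boldsymbol{\theta}))$ for $\mathbf p\in\mathcal P$ (so $I^0\equiv 0$). The sum-of-squares contrast over the first $N$ events is $L^{\mathrm{SoS}}_N(\boldsymbol{\theta})=\sum_{\mathbf{p}\in\mathcal{P}}I^N(\mathbf{p};\boldsymbol{\theta})^2$. *)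

theory Defs
  imports Complex_Main
begin

text \<open>Points of the image plane are pairs of reals; accumulators are integer lattice points.\<close>

definition round_pt :: "real \<times> real \<Rightarrow> int \<times> int" where
  "round_pt w = (round (fst w), round (snd w))"

definition ind :: "int \<times> int \<Rightarrow> real \<times> real \<Rightarrow> nat" where
  "ind p w = (if \<bar>real_of_int (fst p) - fst w\<bar> < 1/2 \<and> \<bar>real_of_int (snd p) - snd w\<bar> < 1/2
              then 1 else 0)"

text \<open>Image of warped events built from the first N events (events indexed 1,2,...).\<close>
definition IWE :: "(real \<times> real \<Rightarrow> real \<Rightarrow> 'th \<Rightarrow> real \<times> real) \<Rightarrow> (nat \<Rightarrow> real \<times> real)
    \<Rightarrow> (nat \<Rightarrow> real) \<Rightarrow> nat \<Rightarrow> int \<times> int \<Rightarrow> 'th \<Rightarrow> nat" where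
  "IWE W x t N p \<theta> = (\<Sum>k=1..N. ind p (W (x k) (t k) \<theta>))"

definition LSoS :: "(real \<times> real \<Rightarrow> real \<Rightarrow> 'th \<Rightarrow> real \<times> real) \<Rightarrow> (nat \<Rightarrow> real \<times> real)
    \<Rightarrow> (nat \<Rightarrow> real) \<Rightarrow> (int \<times> int) set \<Rightarrow> nat \<Rightarrow> 'th \<Rightarrow> nat" where
  "LSoS W x t P N \<theta> = (\<Sum>p\<in>P. (IWE W x t N p \<theta>)^2)"

text \<open>Upper-bound IWE, driven by a choice sequence nu of accumulators (nu (n+1) chosen at step n+1).\<close>
fun Ibar :: "(nat \<Rightarrow> int \<times> int) \<Rightarrow> nat \<Rightarrow> int \<times> int \<Rightarrow> nat" where
  "Ibar \<nu> 0 p = 0"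
| "Ibar \<nu> (Suc n) p = Ibar \<nu> n p + (if p = \<nu> (Suc n) then 1 else 0)"

definition Qb :: "(nat \<Rightarrow> (int \<times> int) set) \<Rightarrow> (nat \<Rightarrow> int \<times> int) \<Rightarrow> nat \<Rightarrow> nat" where
  "Qb B \<nu> n = Max (Ibar \<nu> n ` B (Suc n))"

fun Lbar :: "(nat \<Rightarrow> (int \<times> int) set) \<Rightarrow> (nat \<Rightarrow> int \<times> int) \<Rightarrow> nat \<Rightarrow> nat" where
  "Lbar B \<nu> 0 = 0"
| "Lbar B \<nu> (Suc n) = Lbar B \<nu> n + 1 + 2 * Qb B \<nu> n"

end

theory Submission
  imports Defs
begin

lemma half_round:
  fixes w :: real and p :: int
  assumes "frac w \<noteq> 1/2"
  shows "(\<bar>real_of_int p - w\<bar> < 1/2) \<longleftrightarrow> p = round w"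
proof
  assume a: "\<bar>real_of_int p - w\<bar> < 1/2"
  have a1: "real_of_int p - w < 1/2" "w - real_of_int p < 1/2" using a by arith+
  have "\<lfloor>w + 1/2\<rfloor> = p"
  proof (rule floor_unique)
    show "real_of_int p \<le> w + 1/2" using a1 by linarith
    show "w + 1/2 < real_of_int p + 1" using a1 by linarith
  qed
  thus "p = round w" by (simp add: round_def)
next
  assume h: "p = round w"
  have b1: "real_of_int p \<le> w + 1/2" using of_int_round_le[of w] h by simp
  have b2: "real_of_int p > w - 1/2" using of_int_round_gt[of w] h by simp
  have b3: "real_of_int p \<noteq> w + 1/2"
  proof
    assume e: "real_of_int p = w + 1/2"
    have "w - 1/2 = real_of_int (p - 1)" using e by simp
    hence "w - 1/2 \<in> \<int>" by (metis Ints_of_int)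
    hence "frac w = 1/2" by (subst frac_unique_iff) simp
    with assms show False by simp
  qed
  have "real_of_int p < w + 1/2" using b1 b3 by linarith
  thus "\<bar>real_of_int p - w\<bar> < 1/2" using b2 by arith
qed

lemma ind_round:
  assumes "frac (fst w) \<noteq> 1/2" "frac (snd w) \<noteq> 1/2"
  shows "ind p w = (if p = round_pt w then 1 else 0)"
proof -
  have e: "p = round_pt w \<longleftrightarrow> fst p = round (fst w) \<and> snd p = round (snd w)"
    unfolding round_pt_def by (cases p) simp
  show ?thesis
    unfolding ind_def e half_round[OF assms(1), of "fst p", symmetric]
      half_round[OF assms(2), of "snd p", symmetric] by (rule refl)
qed
lemma Ibar_mono: "m \<le> n \<Longrightarrow> Ibar \<nu> m p \<le> Ibar \<nu> n p"
proof (induction n)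
  case (Suc n) thus ?case by (cases "m = Suc n") (simp_all add: le_Suc_eq)
qed simp

theorem theorem2:
  fixes W :: "real \<times> real \<Rightarrow> real \<Rightarrow> 'th \<Rightarrow> real \<times> real"
    and x :: "nat \<Rightarrow> real \<times> real" and t :: "nat \<Rightarrow> real"
    and M :: nat and \<Theta> :: "'th set" and P :: "(int \<times> int) set"
    and B :: "nat \<Rightarrow> (int \<times> int) set" and \<nu> :: "nat \<Rightarrow> int \<times> int"
  assumes tmono: "\<And>i j. 1 \<le> i \<Longrightarrow> i \<le> j \<Longrightarrow> j \<le> M \<Longrightarrow> t i \<le> t j"
    and Pfin: "finite P"
    and nohalf: "\<And>k \<theta>. 1 \<le> k \<Longrightarrow> k \<le> M \<Longrightarrow> \<theta> \<in> \<Theta> \<Longrightarrow>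
          frac (fst (W (x k) (t k) \<theta>)) \<noteq> 1/2 \<and> frac (snd (W (x k) (t k) \<theta>)) \<noteq> 1/2"
    and inP: "\<And>k \<theta>. 1 \<le> k \<Longrightarrow> k \<le> M \<Longrightarrow> \<theta> \<in> \<Theta> \<Longrightarrow> round_pt (W (x k) (t k) \<theta>) \<in> P"
    and Bsub: "\<And>k. 1 \<le> k \<Longrightarrow> k \<le> M \<Longrightarrow> B k \<subseteq> P"
    and Bcont: "\<And>k \<theta>. 1 \<le> k \<Longrightarrow> k \<le> M \<Longrightarrow> \<theta> \<in> \<Theta> \<Longrightarrow> round_pt (W (x k) (t k) \<theta>) \<in> B k"
    and nest: "\<And>i j \<theta>. \<theta> \<in> \<Theta> \<Longrightarrow> 1 \<le> i \<Longrightarrow> i < j \<Longrightarrow> j \<le> M \<Longrightarrow>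
          round_pt (W (x i) (t i) \<theta>) = round_pt (W (x j) (t j) \<theta>) \<Longrightarrow> B i \<subseteq> B j"
    and nu_in: "\<And>n. n < M \<Longrightarrow> \<nu> (Suc n) \<in> B (Suc n)"
    and nu_max: "\<And>n. n < M \<Longrightarrow> Ibar \<nu> n (\<nu> (Suc n)) = Qb B \<nu> n"
  shows "\<forall>N \<le> M.
      (\<forall>\<theta>\<in>\<Theta>. (N < M \<longrightarrow>
            IWE W x t N (round_pt (W (x (Suc N)) (t (Suc N)) \<theta>)) \<theta> \<le> Qb B \<nu> N)
         \<and> LSoS W x t P N \<theta> \<le> Lbar B \<nu> N)
      \<and> (\<Theta> \<noteq> {} \<longrightarrow> Max ((\<lambda>\<theta>. LSoS W x t P N \<theta>) ` \<Theta>) \<le> Lbar B \<nu> N)"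
proof -
  define r where "r \<theta> k = round_pt (W (x k) (t k) \<theta>)" for \<theta> k
  have Bfin: "finite (B k)" if "1 \<le> k" "k \<le> M" for k
    using Bsub[OF that] Pfin finite_subset by blast
  have IWE_Suc: "IWE W x t (Suc n) p \<theta> = IWE W x t n p \<theta> + (if p = r \<theta> (Suc n) then 1 else 0)"
    if "n < M" "\<theta> \<in> \<Theta>" for n p \<theta>
  proof -
    have "IWE W x t (Suc n) p \<theta> = IWE W x t n p \<theta> + ind p (W (x (Suc n)) (t (Suc n)) \<theta>)"
      unfolding IWE_def by (simp add: sum.cl_ivl_Suc)
    also have "ind p (W (x (Suc n)) (t (Suc n)) \<theta>) = (if p = r \<theta> (Suc n) then 1 else 0)"
      using nohalf[of "Suc n" \<theta>] that unfolding r_def by (intro ind_round) auto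
    finally show ?thesis .
  qed
  have IWE0: "IWE W x t 0 p \<theta> = 0" for p \<theta> unfolding IWE_def by simp
  have maxle: "Ibar \<nu> n q \<le> Max (Ibar \<nu> n ` B j)" if "q \<in> B j" "1 \<le> j" "j \<le> M" for n q j
    using Bfin[OF that(2,3)] that(1) by (intro Max_ge) auto
  have A: "\<forall>j. n < j \<longrightarrow> j \<le> M \<longrightarrow> IWE W x t n (r \<theta> j) \<theta> \<le> Max (Ibar \<nu> n ` B j)"
    if th: "\<theta> \<in> \<Theta>" and "n \<le> M" for n \<theta>
    using \<open>n \<le> M\<close>
  proof (induction n)
    case 0 then show ?case by (simp add: IWE0)
  next
    case (Suc n)
    show ?case
    proof (intro allI impI)
      fix j assume j: "Suc n < j" "j \<le> M"
      show "IWE W x t (Suc n) (r \<theta> j) \<theta> \<le> Max (Ibar \<nu> (Suc n) ` B j)"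
      proof (cases "r \<theta> j = r \<theta> (Suc n)")
        case False
        have "IWE W x t (Suc n) (r \<theta> j) \<theta> = IWE W x t n (r \<theta> j) \<theta>"
          using IWE_Suc[of n \<theta> "r \<theta> j"] Suc.prems th False by simp
        also have "\<dots> \<le> Max (Ibar \<nu> n ` B j)" using Suc j by simp
        also have "\<dots> \<le> Max (Ibar \<nu> (Suc n) ` B j)"
        proof -
          have "B j \<noteq> {}" using Bcont[of j \<theta>] j th by auto
          moreover have "finite (B j)" using Bfin[of j] j by simp
          ultimately have "Max (Ibar \<nu> n ` B j) \<in> Ibar \<nu> n ` B j" by (intro Max_in) auto
          then obtain q where q: "q \<in> B j" "Max (Ibar \<nu> n ` B j) = Ibar \<nu> n q" by auto
          have "Ibar \<nu> n q \<le> Ibar \<nu> (Suc n) q" by (rule Ibar_mono) simp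
          also have "\<dots> \<le> Max (Ibar \<nu> (Suc n) ` B j)" by (rule maxle[OF q(1)]) (use j in auto)
          finally show ?thesis using q by simp
        qed
        finally show ?thesis .
      next
        case True
        have "IWE W x t (Suc n) (r \<theta> j) \<theta> = IWE W x t n (r \<theta> (Suc n)) \<theta> + 1"
          using IWE_Suc[of n \<theta> "r \<theta> j"] Suc.prems th True by simp
        also have "IWE W x t n (r \<theta> (Suc n)) \<theta> \<le> Qb B \<nu> n"
          using Suc j unfolding Qb_def by simp
        also have "Qb B \<nu> n + 1 = Ibar \<nu> (Suc n) (\<nu> (Suc n))"
          using nu_max[of n] Suc.prems by simp
        also have "\<dots> \<le> Max (Ibar \<nu> (Suc n) ` B j)"
        proof -
          have "B (Suc n) \<subseteq> B j" using nest[of \<theta> "Suc n" j] th j True unfolding r_def by simp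
          hence "\<nu> (Suc n) \<in> B j" using nu_in[of n] Suc.prems by auto
          thus ?thesis by (rule maxle) (use j in auto)
        qed
        finally show ?thesis by simp
      qed
    qed
  qed
  have L: "LSoS W x t P n \<theta> \<le> Lbar B \<nu> n" if th: "\<theta> \<in> \<Theta>" and "n \<le> M" for n \<theta>
    using \<open>n \<le> M\<close>
  proof (induction n)
    case 0 then show ?case by (simp add: LSoS_def IWE0)
  next
    case (Suc n)
    let ?I = "\<lambda>p. IWE W x t n p \<theta>"
    let ?c = "r \<theta> (Suc n)"
    have cP: "?c \<in> P" using inP[of "Suc n" \<theta>] Suc.prems th unfolding r_def by simp
    have "LSoS W x t P (Suc n) \<theta> = (\<Sum>p\<in>P. (?I p + (if p = ?c then 1 else 0))^2)"
      unfolding LSoS_def using IWE_Suc[of n \<theta>] Suc.prems th by simp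
    also have "\<dots> = (\<Sum>p\<in>P. (?I p)^2 + (if p = ?c then 2 * ?I p + 1 else 0))"
      by (intro sum.cong) (auto simp: power2_eq_square algebra_simps)
    also have "\<dots> = LSoS W x t P n \<theta> + (2 * ?I ?c + 1)"
      unfolding LSoS_def sum.distrib using Pfin cP by (simp add: sum.delta)
    also have "\<dots> \<le> Lbar B \<nu> n + (2 * Qb B \<nu> n + 1)"
      using Suc A[OF th, of n] unfolding Qb_def by (intro add_mono) auto
    finally show ?case by simp
  qed
  show ?thesis
  proof (intro allI impI conjI ballI)
    fix N \<theta> assume "N \<le> M" "\<theta> \<in> \<Theta>" "N < M"
    then show "IWE W x t N (round_pt (W (x (Suc N)) (t (Suc N)) \<theta>)) \<theta> \<le> Qb B \<nu> N"
      using A[of \<theta> N] unfolding Qb_def r_def by simp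
  next
    fix N \<theta> assume "N \<le> M" "\<theta> \<in> \<Theta>"
    then show "LSoS W x t P N \<theta> \<le> Lbar B \<nu> N" using L by simp
  next
    fix N assume N: "N \<le> M" and ne: "\<Theta> \<noteq> {}"
    have sub: "(\<lambda>\<theta>. LSoS W x t P N \<theta>) ` \<Theta> \<subseteq> {..Lbar B \<nu> N}" using L N by auto
    hence "finite ((\<lambda>\<theta>. LSoS W x t P N \<theta>) ` \<Theta>)" using finite_subset by blast
    then show "Max ((\<lambda>\<theta>. LSoS W x t P N \<theta>) ` \<Theta>) \<le> Lbar B \<nu> N"
      using sub ne by (subst Max_le_iff) auto
  qed
qed
end
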